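(* Fix probabilities $\{\pi_k\}_{k\ge1}$ with $\pi_k=\Pr(Q=k\mid Q\ge1)\ge0$. Then the function $$L(R)=\sum_{k=2}^{\infty}\pi_k\left[1-\frac{R^k-(R-1)^k}{k\,R^{k-1}}\right]$$ decreases monotonically with increasing number of RA preambles $R\ge1$.
   Context: $Q$ is the random number of user terminals transmitting an RA preamble in a frame, and $R$ is the number of allowed RA preambles; $L(R)$ is the collision-based lower bound on the timing error probability. *)

theory Defs
  imports Complex_Main
begin

text \<open>The sum is over k >= 2,
  written with index shift k = j + 2.\<close>
definition L :: "(nat \<Rightarrow> real) \<Rightarrow> nat \<Rightarrow> real" where
  "L \<pi> R = (\<Sum>j. (let k = j + 2 in
      \<pi> k * (1 - (real R ^ k - (real R - 1) ^ k) / (real k * real R ^ (k - 1)))))"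

end

theory Submission
  imports Defs
begin

lemma key:
  fixes R :: real and k :: nat
  assumes R: "R \<ge> 1" and k: "k \<ge> 1"
  shows "(R ^ k - (R - 1) ^ k) / (real k * R ^ (k - 1)) = (\<Sum>i<k. ((R-1)/R)^i) / real k"
proof -
  define x where "x = (R-1)/R"
  have Rx: "R - 1 = x * R" using R by (simp add: x_def)
  have 1: "1 - x = 1 / R" using R by (simp add: x_def field_simps)
  have "R ^ k - (R - 1) ^ k = R^k * (1 - x^k)" by (simp add: Rx power_mult_distrib algebra_simps)
  also have "\<dots> = R^k * (1/R) * (\<Sum>i<k. x^i)" by (simp add: one_diff_power_eq 1)
  also have "R^k * (1/R) = R^(k-1)" using R k
    by (metis One_nat_def Suc_pred less_eq_Suc_le nonzero_mult_div_cancel_left not_one_le_zero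
        order_trans power_Suc times_divide_eq_right mult_1_right zero_le_one)
  finally show ?thesis using R by (simp add: x_def)
qed

lemma term_mono:
  fixes R1 R2 k :: nat
  assumes "1 \<le> R1" "R1 \<le> R2" "k \<ge> 1"
  shows "(real R1 ^ k - (real R1 - 1) ^ k) / (real k * real R1 ^ (k - 1))
       \<le> (real R2 ^ k - (real R2 - 1) ^ k) / (real k * real R2 ^ (k - 1))"
proof -
  have r1: "real R1 \<ge> 1" "real R2 \<ge> 1" using assms by auto
  have x: "(real R1 - 1) / real R1 \<le> (real R2 - 1) / real R2"
    using assms r1 by (simp add: field_simps)
  have x0: "0 \<le> (real R1 - 1) / real R1" using r1 by simp
  have "(\<Sum>i<k. ((real R1-1)/real R1)^i) \<le> (\<Sum>i<k. ((real R2-1)/real R2)^i)"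
    by (intro sum_mono power_mono x x0)
  then show ?thesis using key[OF r1(1) assms(3)] key[OF r1(2) assms(3)]
    by (simp add: divide_right_mono)
qed

lemma term_bounds:
  fixes R k :: nat
  assumes "1 \<le> R" "k \<ge> 1"
  shows "0 \<le> (real R ^ k - (real R - 1) ^ k) / (real k * real R ^ (k - 1))
    \<and> (real R ^ k - (real R - 1) ^ k) / (real k * real R ^ (k - 1)) \<le> 1"
proof -
  have r: "real R \<ge> 1" using assms by auto
  have x0: "0 \<le> (real R - 1) / real R" and x1: "(real R - 1) / real R \<le> 1" using r by auto
  have "(\<Sum>i<k. ((real R-1)/real R)^i) \<le> (\<Sum>i<k. 1)"
    by (intro sum_mono power_le_one x0 x1)
  moreover have "0 \<le> (\<Sum>i<k. ((real R-1)/real R)^i)" by (intro sum_nonneg zero_le_power x0)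
  ultimately show ?thesis using key[OF r assms(2)] assms by auto
qed

theorem corollary1:
  fixes \<pi> :: "nat \<Rightarrow> real"
  assumes nonneg: "\<And>k. k \<ge> 1 \<Longrightarrow> \<pi> k \<ge> 0"
    and prob: "(\<lambda>j. \<pi> (j + 1)) sums 1"
  shows "\<And>R1 R2. 1 \<le> R1 \<Longrightarrow> R1 \<le> R2 \<Longrightarrow> L \<pi> R2 \<le> L \<pi> R1"
proof -
  fix R1 R2 :: nat
  assume a: "1 \<le> R1" "R1 \<le> R2"
  define f where "f = (\<lambda>R j. (let k = j + 2 in
      \<pi> k * (1 - (real R ^ k - (real R - 1) ^ k) / (real k * real R ^ (k - 1)))))"
  have s1: "summable (\<lambda>j. \<pi> (j + 1))" using prob by (rule sums_summable)
  have s2: "summable (\<lambda>j. \<pi> (j + 2))"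
    using summable_ignore_initial_segment[OF s1, of 1] by (simp add: add.commute add.left_commute)
  have sf: "summable (f R)" if "1 \<le> R" for R
  proof (rule summable_comparison_test'[OF s2])
    fix j :: nat assume "0 \<le> j"
    have b: "0 \<le> 1 - (real R ^ (j+2) - (real R - 1) ^ (j+2)) / (real (j+2) * real R ^ (j+2 - 1))"
         "1 - (real R ^ (j+2) - (real R - 1) ^ (j+2)) / (real (j+2) * real R ^ (j+2 - 1)) \<le> 1"
      using term_bounds[OF that, of "j+2"] by auto
    have p: "0 \<le> \<pi> (j+2)" using nonneg by simp
    show "norm (f R j) \<le> \<pi> (j + 2)"
      unfolding f_def Let_def using b p
      by (simp add: abs_mult mult_left_le)
  qed
  have le: "f R2 j \<le> f R1 j" for j
  proof -
    have p: "0 \<le> \<pi> (j+2)" using nonneg by simp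
    show ?thesis unfolding f_def Let_def
      using term_mono[OF a, of "j+2"] p by (auto intro!: mult_left_mono)
  qed
  have "suminf (f R2) \<le> suminf (f R1)"
    by (rule suminf_le[OF le sf sf]) (use a in auto)
  then show "L \<pi> R2 \<le> L \<pi> R1" unfolding L_def f_def .
qed

end
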